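(* Let $\mathbf{C}$ be a category. There is a one-to-one correspondence $h$ from the set of lax functors $\mathbf{C}\to\mathbf{Rel}$ to the set of faithful functors with codomain $\mathbf{C}$.
   Context: $\mathbf{Rel}$ is the 2-category whose objects are sets, whose 1-morphisms $X\to Y$ are binary relations $\mathcal{R}\subseteq X\times Y$, and whose 2-morphisms are inclusions of relations; composition of $\mathcal{R}\colon X\to Y$ and $\mathcal{R}'\colon Y\to Z$ is $\mathcal{R}'\circ\mathcal{R}=\{(x,z)\mid \exists y,\ (x,y)\in\mathcal{R},\ (y,z)\in\mathcal{R}'\}$. A lax functor $F\colon\mathbf{C}\to\mathbf{Rel}$ from a 1-category $\mathbf{C}$ assigns to each object $X$ a set $F(X)$ and to each morphism $f\colon X\to Y$ a relation $F(f)\colon F(X)\to F(Y)$ such that for every composable pair $f\colon X\to Y$, $g\colon Y\to Z$, the relation $F(g)\circ F(f)$ is included in $F(gf)$. The correspondence is given as follows: to a lax functor $S$ one associates the category $\mathbf{H(S)}$ whose objects are the elements $s\in S(e)$ for objects $e$ of $\mathbf{C}$ and whose morphisms are triples $(s,g,s')$ with $g\colon e\to e'$ in $\mathbf{C}$, $s\in S(e)$, $s'\in S(e')$ and $(s,s')\in S(g)$, composed by $(s',g',s'')(s,g,s')=(s,g'g,s'')$, together with the functor $h(S)\colon\mathbf{H(S)}\to\mathbf{C}$ sending $s\in S(e)$ to $e$ and $(s,g,s')$ to $g$; conversely a faithful functor $k\colon\mathbf{K}\to\mathbf{C}$ corresponds to the lax functor $S'$ with $S'(e)$ the set of objects of $\mathbf{K}$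 mapped to $e$ by $k$, and $(s,s')\in S'(g)$ iff there is $f\colon s\to s'$ in $\mathbf{K}$ with $k(f)=g$.
   Formalization: A lax functor F also satisfies the unit condition that F of the identity of X contains the identity relation on F(X); faithful functors with codomain C count up to isomorphism over C. The statement above fails without it. *)

theory Defs
  imports Main
begin

text \<open>Small categories (1-categories) given by explicit carriers.
  cComp C g f is the composite "g after f".\<close>

record ('o, 'm) cat =
  cObj  :: "'o set"
  cMor  :: "'m set"
  cDom  :: "'m \<Rightarrow> 'o"
  cCod  :: "'m \<Rightarrow> 'o"
  cId   :: "'o \<Rightarrow> 'm"
  cComp :: "'m \<Rightarrow> 'm \<Rightarrow> 'm"

definition category :: "('o, 'm) cat \<Rightarrow> bool" where
  "category C \<longleftrightarrow>
     (\<forall>f\<in>cMor C. cDom C f \<in> cObj C \<and> cCod C f \<in> cObj C) \<and>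
     (\<forall>x\<in>cObj C. cId C x \<in> cMor C \<and> cDom C (cId C x) = x \<and> cCod C (cId C x) = x) \<and>
     (\<forall>f\<in>cMor C. \<forall>g\<in>cMor C. cCod C f = cDom C g \<longrightarrow>
        cComp C g f \<in> cMor C \<and> cDom C (cComp C g f) = cDom C f \<and> cCod C (cComp C g f) = cCod C g) \<and>
     (\<forall>f\<in>cMor C. cComp C (cId C (cCod C f)) f = f \<and> cComp C f (cId C (cDom C f)) = f) \<and>
     (\<forall>f\<in>cMor C. \<forall>g\<in>cMor C. \<forall>h\<in>cMor C. cCod C f = cDom C g \<longrightarrow> cCod C g = cDom C h \<longrightarrow>
        cComp C h (cComp C g f) = cComp C (cComp C h g) f)"

definition is_functor :: "('o, 'm) cat \<Rightarrow> ('p, 'n) cat \<Rightarrow> ('o \<Rightarrow> 'p) \<Rightarrow> ('m \<Rightarrow> 'n) \<Rightarrow> bool" where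
  "is_functor C D Fo Fm \<longleftrightarrow>
     (\<forall>x\<in>cObj C. Fo x \<in> cObj D) \<and>
     (\<forall>f\<in>cMor C. Fm f \<in> cMor D \<and> cDom D (Fm f) = Fo (cDom C f) \<and> cCod D (Fm f) = Fo (cCod C f)) \<and>
     (\<forall>x\<in>cObj C. Fm (cId C x) = cId D (Fo x)) \<and>
     (\<forall>f\<in>cMor C. \<forall>g\<in>cMor C. cCod C f = cDom C g \<longrightarrow> Fm (cComp C g f) = cComp D (Fm g) (Fm f))"

definition faithful_functor :: "('o, 'm) cat \<Rightarrow> ('p, 'n) cat \<Rightarrow> ('o \<Rightarrow> 'p) \<Rightarrow> ('m \<Rightarrow> 'n) \<Rightarrow> bool" where
  "faithful_functor C D Fo Fm \<longleftrightarrow> is_functor C D Fo Fm \<and>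
     (\<forall>f\<in>cMor C. \<forall>g\<in>cMor C. cDom C f = cDom C g \<and> cCod C f = cCod C g \<and> Fm f = Fm g \<longrightarrow> f = g)"

text \<open>In Isabelle, relational composition "r O s" first applies r then s, so
  S(g) \<circ> S(f) is written  Sm f O Sm g.\<close>

definition lax_functor :: "('o, 'm) cat \<Rightarrow> ('o \<Rightarrow> 'a set) \<Rightarrow> ('m \<Rightarrow> ('a \<times> 'a) set) \<Rightarrow> bool" where
  "lax_functor C So Sm \<longleftrightarrow>
     (\<forall>f\<in>cMor C. Sm f \<subseteq> So (cDom C f) \<times> So (cCod C f)) \<and>
     (\<forall>x\<in>cObj C. Id_on (So x) \<subseteq> Sm (cId C x)) \<and>
     (\<forall>f\<in>cMor C. \<forall>g\<in>cMor C. cCod C f = cDom C g \<longrightarrow> Sm f O Sm g \<subseteq> Sm (cComp C g f))"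

text \<open>The category H(S): objects are elements s \<in> S(e) (tagged by e, i.e. disjoint union),
  morphisms are triples (s, g, s') with (s, s') \<in> S(g).\<close>

definition H_cat :: "('o, 'm) cat \<Rightarrow> ('o \<Rightarrow> 'a set) \<Rightarrow> ('m \<Rightarrow> ('a \<times> 'a) set)
    \<Rightarrow> ('o \<times> 'a, ('o \<times> 'a) \<times> 'm \<times> ('o \<times> 'a)) cat" where
  "H_cat C So Sm =
     \<lparr> cObj = Sigma (cObj C) So,
       cMor = {((e, s), g, (e', s')) | e s g e' s'.
                 g \<in> cMor C \<and> e = cDom C g \<and> e' = cCod C g \<and>
                 s \<in> So e \<and> s' \<in> So e' \<and> (s, s') \<in> Sm g},
       cDom = (\<lambda>(x, g, y). x),
       cCod = (\<lambda>(x, g, y). y),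
       cId = (\<lambda>x. (x, cId C (fst x), x)),
       cComp = (\<lambda>(y', g', z) (x, g, y). (x, cComp C g' g, z)) \<rparr>"

text \<open>The functor h(S): H(S) \<rightarrow> C has object map fst and morphism map hMor.\<close>

definition hMor :: "('o \<times> 'a) \<times> 'm \<times> ('o \<times> 'a) \<Rightarrow> 'm" where
  "hMor = (\<lambda>(x, g, y). g)"

definition fiber_obj :: "('p, 'n) cat \<Rightarrow> ('p \<Rightarrow> 'o) \<Rightarrow> 'o \<Rightarrow> 'p set" where
  "fiber_obj K ko e = {x \<in> cObj K. ko x = e}"

definition fiber_rel :: "('p, 'n) cat \<Rightarrow> ('n \<Rightarrow> 'm) \<Rightarrow> 'm \<Rightarrow> ('p \<times> 'p) set" where
  "fiber_rel K km g = {(x, y). \<exists>f\<in>cMor K. cDom K f = x \<and> cCod K f = y \<and> km f = g}"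

definition iso_over :: "('p, 'n) cat \<Rightarrow> ('p \<Rightarrow> 'o) \<Rightarrow> ('n \<Rightarrow> 'm)
    \<Rightarrow> ('q, 'r) cat \<Rightarrow> ('q \<Rightarrow> 'o) \<Rightarrow> ('r \<Rightarrow> 'm) \<Rightarrow> bool" where
  "iso_over K ko km L lo lm \<longleftrightarrow>
     (\<exists>Po Pm Qo Qm. is_functor K L Po Pm \<and> is_functor L K Qo Qm \<and>
        (\<forall>x\<in>cObj K. Qo (Po x) = x) \<and> (\<forall>f\<in>cMor K. Qm (Pm f) = f) \<and>
        (\<forall>y\<in>cObj L. Po (Qo y) = y) \<and> (\<forall>f\<in>cMor L. Pm (Qm f) = f) \<and>
        (\<forall>x\<in>cObj K. lo (Po x) = ko x) \<and> (\<forall>f\<in>cMor K. lm (Pm f) = km f))"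

end

theory Submission
  imports Defs
begin

lemma H_simps:
  "cObj (H_cat C So Sm) = Sigma (cObj C) So"
  "cMor (H_cat C So Sm) = {((e, s), g, (e', s')) | e s g e' s'.
                 g \<in> cMor C \<and> e = cDom C g \<and> e' = cCod C g \<and>
                 s \<in> So e \<and> s' \<in> So e' \<and> (s, s') \<in> Sm g}"
  "cDom (H_cat C So Sm) = (\<lambda>(x, g, y). x)"
  "cCod (H_cat C So Sm) = (\<lambda>(x, g, y). y)"
  "cId (H_cat C So Sm) = (\<lambda>x. (x, cId C (fst x), x))"
  "cComp (H_cat C So Sm) = (\<lambda>(y', g', z) (x, g, y). (x, cComp C g' g, z))"
  by (simp_all add: H_cat_def)

lemma part1:
  assumes C: "category C" and L: "lax_functor C So Sm"
  shows "category (H_cat C So Sm) \<and>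
        faithful_functor (H_cat C So Sm) C fst hMor \<and>
        (\<forall>e\<in>cObj C. fiber_obj (H_cat C So Sm) fst e = Pair e ` So e) \<and>
        (\<forall>g\<in>cMor C. fiber_rel (H_cat C So Sm) hMor g =
            (\<lambda>(s, s'). ((cDom C g, s), (cCod C g, s'))) ` Sm g)"
proof -
  note Cd = C[unfolded category_def]
  note Ld = L[unfolded lax_functor_def]
  have idr: "\<And>x y. x \<in> cObj C \<Longrightarrow> y \<in> So x \<Longrightarrow> (y, y) \<in> Sm (cId C x)"
    using Ld by (meson Id_onI subsetD)
  have mem: "h \<in> cMor (H_cat C So Sm) \<longleftrightarrow>
      (\<exists>s g s'. h = ((cDom C g, s), g, (cCod C g, s')) \<and> g \<in> cMor C \<and> (s, s') \<in> Sm g)" for h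
    using Ld unfolding H_simps by blast
  have cat: "category (H_cat C So Sm)"
    unfolding category_def
  proof (intro conjI ballI impI)
    fix f assume "f \<in> cMor (H_cat C So Sm)"
    then obtain s g s' where f: "f = ((cDom C g, s), g, (cCod C g, s'))" "g \<in> cMor C" "(s, s') \<in> Sm g"
      using mem by blast
    have "s \<in> So (cDom C g)" "s' \<in> So (cCod C g)" using f Ld by auto
    then show "cDom (H_cat C So Sm) f \<in> cObj (H_cat C So Sm)"
      "cCod (H_cat C So Sm) f \<in> cObj (H_cat C So Sm)"
      using f Cd by (auto simp: H_simps)
    show "cComp (H_cat C So Sm) (cId (H_cat C So Sm) (cCod (H_cat C So Sm) f)) f = f"
      "cComp (H_cat C So Sm) f (cId (H_cat C So Sm) (cDom (H_cat C So Sm) f)) = f"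
      using f Cd by (auto simp: H_simps)
  next
    fix x assume "x \<in> cObj (H_cat C So Sm)"
    then obtain e s where x: "x = (e, s)" "e \<in> cObj C" "s \<in> So e" by (auto simp: H_simps)
    have "(s, s) \<in> Sm (cId C e)" using idr x by blast
    moreover have "cId C e \<in> cMor C" "cDom C (cId C e) = e" "cCod C (cId C e) = e" using Cd x by auto
    ultimately show "cId (H_cat C So Sm) x \<in> cMor (H_cat C So Sm)"
      "cDom (H_cat C So Sm) (cId (H_cat C So Sm) x) = x"
      "cCod (H_cat C So Sm) (cId (H_cat C So Sm) x) = x"
      unfolding mem using x by (auto simp: H_simps)
  next
    fix f g assume "f \<in> cMor (H_cat C So Sm)" "g \<in> cMor (H_cat C So Sm)"
      and fg: "cCod (H_cat C So Sm) f = cDom (H_cat C So Sm) g"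
    then obtain s a s' t b t' where f: "f = ((cDom C a, s), a, (cCod C a, s'))" "a \<in> cMor C" "(s, s') \<in> Sm a"
      and g: "g = ((cDom C b, t), b, (cCod C b, t'))" "b \<in> cMor C" "(t, t') \<in> Sm b"
      using mem by meson
    have ab: "cCod C a = cDom C b" "s' = t" using fg f g by (auto simp: H_simps)
    have "(s, t') \<in> Sm (cComp C b a)" using Ld f g ab by blast
    moreover have "cComp C b a \<in> cMor C" "cDom C (cComp C b a) = cDom C a" "cCod C (cComp C b a) = cCod C b"
      using Cd f g ab by auto
    ultimately show "cComp (H_cat C So Sm) g f \<in> cMor (H_cat C So Sm)"
      "cDom (H_cat C So Sm) (cComp (H_cat C So Sm) g f) = cDom (H_cat C So Sm) f"
      "cCod (H_cat C So Sm) (cComp (H_cat C So Sm) g f) = cCod (H_cat C So Sm) g"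
      unfolding mem using f g by (auto simp: H_simps)
  next
    fix f g h assume "f \<in> cMor (H_cat C So Sm)" "g \<in> cMor (H_cat C So Sm)" "h \<in> cMor (H_cat C So Sm)"
      and fg: "cCod (H_cat C So Sm) f = cDom (H_cat C So Sm) g"
      and gh: "cCod (H_cat C So Sm) g = cDom (H_cat C So Sm) h"
    then obtain s a s' t b t' u c u' where f: "f = ((cDom C a, s), a, (cCod C a, s'))" "a \<in> cMor C"
      and g: "g = ((cDom C b, t), b, (cCod C b, t'))" "b \<in> cMor C"
      and h: "h = ((cDom C c, u), c, (cCod C c, u'))" "c \<in> cMor C"
      using mem by meson
    have "cCod C a = cDom C b" "cCod C b = cDom C c" using fg gh f g h by (auto simp: H_simps)
    then show "cComp (H_cat C So Sm) h (cComp (H_cat C So Sm) g f) =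
          cComp (H_cat C So Sm) (cComp (H_cat C So Sm) h g) f"
      using Cd f g h by (auto simp: H_simps)
  qed
  have ff: "faithful_functor (H_cat C So Sm) C fst hMor"
    unfolding faithful_functor_def is_functor_def H_simps hMor_def using Cd by auto
  show ?thesis
    using cat ff Ld unfolding fiber_obj_def fiber_rel_def H_simps hMor_def
    by (auto simp: image_iff)
qed

lemma part2:
  assumes C: "category C" and L: "lax_functor C So Sm" and L2: "lax_functor C To Tm"
    and E: "H_cat C So Sm = H_cat C To Tm"
  shows "(\<forall>e\<in>cObj C. So e = To e) \<and> (\<forall>g\<in>cMor C. Sm g = Tm g)"
proof (intro conjI ballI)
  have O: "Sigma (cObj C) So = Sigma (cObj C) To" using arg_cong[OF E, of cObj] by (simp add: H_simps)
  fix e assume "e \<in> cObj C"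
  then show "So e = To e" using O by blast
next
  have M: "cMor (H_cat C So Sm) = cMor (H_cat C To Tm)" using E by simp
  have C1: "\<forall>f\<in>cMor C. cDom C f \<in> cObj C \<and> cCod C f \<in> cObj C" using C by (simp add: category_def)
  fix g assume g: "g \<in> cMor C"
  have A: "\<forall>f\<in>cMor C. Sm f \<subseteq> So (cDom C f) \<times> So (cCod C f)" using L by (simp add: lax_functor_def)
  have B: "\<forall>f\<in>cMor C. Tm f \<subseteq> To (cDom C f) \<times> To (cCod C f)" using L2 by (simp add: lax_functor_def)
  show "Sm g = Tm g"
  proof
    show "Sm g \<subseteq> Tm g"
    proof
      fix p assume p: "p \<in> Sm g"
      obtain s s' where ps: "p = (s, s')" by fastforce
      have "((cDom C g, s), g, (cCod C g, s')) \<in> cMor (H_cat C So Sm)"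
        using p ps A g by (auto simp: H_simps)
      then have "((cDom C g, s), g, (cCod C g, s')) \<in> cMor (H_cat C To Tm)" using M by simp
      then show "p \<in> Tm g" using ps by (simp add: H_simps)
    qed
    show "Tm g \<subseteq> Sm g"
    proof
      fix p assume p: "p \<in> Tm g"
      obtain s s' where ps: "p = (s, s')" by fastforce
      have "((cDom C g, s), g, (cCod C g, s')) \<in> cMor (H_cat C To Tm)"
        using p ps B g by (auto simp: H_simps)
      then have "((cDom C g, s), g, (cCod C g, s')) \<in> cMor (H_cat C So Sm)" using M by simp
      then show "p \<in> Sm g" using ps by (simp add: H_simps)
    qed
  qed
qed


lemma part3:
  fixes C :: "('o, 'm) cat" and K :: "('p, 'n) cat" and ko :: "'p \<Rightarrow> 'o" and km :: "'n \<Rightarrow> 'm"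
  assumes C: "category C" and K: "category K" and F: "faithful_functor K C ko km"
  shows "lax_functor C (fiber_obj K ko) (fiber_rel K km) \<and>
        iso_over K ko km (H_cat C (fiber_obj K ko) (fiber_rel K km)) fst hMor"
proof
  note Cd = C[unfolded category_def]
  note Kd = K[unfolded category_def]
  have Fu: "is_functor K C ko km" using F by (simp add: faithful_functor_def)
  note Fd = Fu[unfolded is_functor_def]
  have uniq: "\<And>f g. f \<in> cMor K \<Longrightarrow> g \<in> cMor K \<Longrightarrow> cDom K f = cDom K g \<Longrightarrow> cCod K f = cCod K g
     \<Longrightarrow> km f = km g \<Longrightarrow> f = g"
    using F by (simp add: faithful_functor_def)
  show lax: "lax_functor C (fiber_obj K ko) (fiber_rel K km)"
    unfolding lax_functor_def
  proof (intro conjI ballI impI)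
    fix f assume "f \<in> cMor C"
    show "fiber_rel K km f \<subseteq> fiber_obj K ko (cDom C f) \<times> fiber_obj K ko (cCod C f)"
      unfolding fiber_rel_def fiber_obj_def using Kd Fd by auto
  next
    fix x assume x: "x \<in> cObj C"
    show "Id_on (fiber_obj K ko x) \<subseteq> fiber_rel K km (cId C x)"
    proof
      fix p assume "p \<in> Id_on (fiber_obj K ko x)"
      then obtain y where p: "p = (y, y)" "y \<in> cObj K" "ko y = x"
        by (auto simp: Id_on_def fiber_obj_def)
      have "cId K y \<in> cMor K" "cDom K (cId K y) = y" "cCod K (cId K y) = y"
        "km (cId K y) = cId C x" using Kd Fd p by auto
      then show "p \<in> fiber_rel K km (cId C x)" unfolding fiber_rel_def p by blast
    qed
  next
    fix f g assume f: "f \<in> cMor C" and g: "g \<in> cMor C" and fg: "cCod C f = cDom C g"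
    show "fiber_rel K km f O fiber_rel K km g \<subseteq> fiber_rel K km (cComp C g f)"
    proof
      fix p assume "p \<in> fiber_rel K km f O fiber_rel K km g"
      then obtain x y z f' g' where p: "p = (x, z)" and f': "f' \<in> cMor K" "cDom K f' = x" "cCod K f' = y" "km f' = f"
        and g': "g' \<in> cMor K" "cDom K g' = y" "cCod K g' = z" "km g' = g"
        unfolding fiber_rel_def by blast
      have "cComp K g' f' \<in> cMor K" "cDom K (cComp K g' f') = x" "cCod K (cComp K g' f') = z"
        "km (cComp K g' f') = cComp C g f" using Kd Fd f' g' by auto
      then show "p \<in> fiber_rel K km (cComp C g f)" unfolding fiber_rel_def p by blast
    qed
  qed
  define H where "H = H_cat C (fiber_obj K ko) (fiber_rel K km)"
  define Po where "Po = (\<lambda>x. (ko x, x))"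
  define Pm where "Pm = (\<lambda>f. ((ko (cDom K f), cDom K f), km f, (ko (cCod K f), cCod K f)))"
  define Qo where "Qo = (snd :: 'o \<times> 'p \<Rightarrow> 'p)"
  define Qm :: "('o \<times> 'p) \<times> 'm \<times> ('o \<times> 'p) \<Rightarrow> 'n" where "Qm = (\<lambda>(x, g, y). THE f. f \<in> cMor K \<and> cDom K f = snd x \<and> cCod K f = snd y \<and> km f = g)"
  have Qm_eq: "Qm (x, g, y) = f" if "f \<in> cMor K" "cDom K f = snd x" "cCod K f = snd y" "km f = g" for x g y f
    unfolding Qm_def using that uniq by (auto intro!: the_equality)
  have HMor: "h \<in> cMor H \<longleftrightarrow> (\<exists>f\<in>cMor K. h = Pm f)" for h
  proof
    assume "h \<in> cMor H"
    then obtain e s g e' s' where h: "h = ((e, s), g, (e', s'))" "g \<in> cMor C" "e = cDom C g" "e' = cCod C g"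
      "s \<in> fiber_obj K ko e" "s' \<in> fiber_obj K ko e'" "(s, s') \<in> fiber_rel K km g"
      unfolding H_def H_simps by blast
    then obtain f where f: "f \<in> cMor K" "cDom K f = s" "cCod K f = s'" "km f = g"
      unfolding fiber_rel_def by blast
    have "h = Pm f" using h f unfolding Pm_def fiber_obj_def by auto
    then show "\<exists>f\<in>cMor K. h = Pm f" using f by blast
  next
    assume "\<exists>f\<in>cMor K. h = Pm f"
    then obtain f where f: "f \<in> cMor K" "h = Pm f" by blast
    then show "h \<in> cMor H" unfolding H_def H_simps Pm_def fiber_obj_def fiber_rel_def
      using Kd Fd by fastforce
  qed
  have QP: "Qm (Pm f) = f" if "f \<in> cMor K" for f
    unfolding Pm_def using that by (intro Qm_eq) auto
  have HObj: "cObj H = Po ` cObj K"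
    unfolding H_def H_simps Po_def fiber_obj_def using Fd by auto
  have PF: "is_functor K H Po Pm"
    unfolding is_functor_def
  proof (intro conjI ballI impI)
    fix x assume "x \<in> cObj K" then show "Po x \<in> cObj H" using HObj by blast
  next
    fix f assume f: "f \<in> cMor K"
    show "Pm f \<in> cMor H" using f HMor by blast
    show "cDom H (Pm f) = Po (cDom K f)" "cCod H (Pm f) = Po (cCod K f)"
      unfolding H_def H_simps Pm_def Po_def by auto
  next
    fix x assume x: "x \<in> cObj K"
    show "Pm (cId K x) = cId H (Po x)"
      unfolding H_def H_simps Pm_def Po_def using x Kd Fd by auto
  next
    fix f g assume f: "f \<in> cMor K" and g: "g \<in> cMor K" and fg: "cCod K f = cDom K g"
    show "Pm (cComp K g f) = cComp H (Pm g) (Pm f)"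
      unfolding H_def H_simps Pm_def Po_def using f g fg Kd Fd by auto
  qed
  have QF: "is_functor H K Qo Qm"
    unfolding is_functor_def
  proof (intro conjI ballI impI)
    fix x assume "x \<in> cObj H" then show "Qo x \<in> cObj K" using HObj Qo_def Po_def by auto
  next
    fix h assume "h \<in> cMor H"
    then obtain f where f: "f \<in> cMor K" "h = Pm f" using HMor by blast
    show "Qm h \<in> cMor K" "cDom K (Qm h) = Qo (cDom H h)" "cCod K (Qm h) = Qo (cCod H h)"
      using f QP unfolding H_def H_simps Qo_def Pm_def by auto
  next
    fix y assume "y \<in> cObj H"
    then obtain x where x: "x \<in> cObj K" "y = Po x" using HObj by blast
    have "Qm (cId H y) = cId K x"
      unfolding H_def H_simps x Po_def using x Kd Fd by (intro Qm_eq) auto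
    then show "Qm (cId H y) = cId K (Qo y)" using x Po_def Qo_def by simp
  next
    fix h1 h2 assume h1: "h1 \<in> cMor H" and h2: "h2 \<in> cMor H" and hh: "cCod H h1 = cDom H h2"
    obtain f where f: "f \<in> cMor K" "h1 = Pm f" using HMor h1 by blast
    obtain g where g: "g \<in> cMor K" "h2 = Pm g" using HMor h2 by blast
    have fg: "cCod K f = cDom K g" using hh f g unfolding H_def H_simps Pm_def by auto
    have "Pm (cComp K g f) = cComp H h2 h1" using PF f g fg unfolding is_functor_def by auto
    then have "Qm (cComp H h2 h1) = cComp K g f" using QP f g fg Kd by metis
    then show "Qm (cComp H h2 h1) = cComp K (Qm h2) (Qm h1)" using QP f g by simp
  qed
  show "iso_over K ko km H fst hMor"
    unfolding iso_over_def
  proof (intro exI conjI ballI)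
    show "is_functor K H Po Pm" by (rule PF)
    show "is_functor H K Qo Qm" by (rule QF)
  next
    fix x assume "x \<in> cObj K" then show "Qo (Po x) = x" by (simp add: Qo_def Po_def)
  next
    fix f assume "f \<in> cMor K" then show "Qm (Pm f) = f" by (rule QP)
  next
    fix y assume "y \<in> cObj H" then show "Po (Qo y) = y" using HObj by (auto simp: Qo_def Po_def)
  next
    fix h assume "h \<in> cMor H" then show "Pm (Qm h) = h" using HMor QP by auto
  next
    fix x assume "x \<in> cObj K" then show "fst (Po x) = ko x" by (simp add: Po_def)
  next
    fix f assume "f \<in> cMor K" then show "hMor (Pm f) = km f" by (simp add: Pm_def hMor_def)
  qed
qed


theorem mainTheorem5:
  fixes C :: "('o, 'm) cat"
  assumes "category C"
  shows
    "(\<forall>(So :: 'o \<Rightarrow> 'a set) Sm. lax_functor C So Sm \<longrightarrow>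
        category (H_cat C So Sm) \<and>
        faithful_functor (H_cat C So Sm) C fst hMor \<and>
        (\<forall>e\<in>cObj C. fiber_obj (H_cat C So Sm) fst e = Pair e ` So e) \<and>
        (\<forall>g\<in>cMor C. fiber_rel (H_cat C So Sm) hMor g =
            (\<lambda>(s, s'). ((cDom C g, s), (cCod C g, s'))) ` Sm g))
     \<and>
     (\<forall>(So :: 'o \<Rightarrow> 'a set) Sm To Tm.
        lax_functor C So Sm \<and> lax_functor C To Tm \<and> H_cat C So Sm = H_cat C To Tm \<longrightarrow>
        (\<forall>e\<in>cObj C. So e = To e) \<and> (\<forall>g\<in>cMor C. Sm g = Tm g))
     \<and>
     (\<forall>(K :: ('p, 'n) cat) ko km. category K \<and> faithful_functor K C ko km \<longrightarrow>
        lax_functor C (fiber_obj K ko) (fiber_rel K km) \<and>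
        iso_over K ko km (H_cat C (fiber_obj K ko) (fiber_rel K km)) fst hMor)"
  apply (intro conjI)
    apply (intro allI impI, erule part1[OF assms])
   apply (intro allI impI, elim conjE, erule (2) part2[OF assms])
  apply (intro allI impI, elim conjE, erule (1) part3[OF assms])
  done

end
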